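(* Let $\pi$ be a prior satisfying conditions (MD) and (MZ) below, and suppose moreover that the function $f$ with $\pi_\eta(\eta\mid\theta)=f(\eta'W(P)\eta\mid\theta,W(P))$ satisfies: $f(u\mid\theta,W(P))=f(u)$ for all $(W(P),\theta)$, where $f$ is strictly positive, continuous and non-increasing in $u\ge0$, and $\lim_{u\to\infty}f(au)/f(u)=0$ for every $a>1$. (MD): the conditional prior of $(Y(P),\theta)$ given $(X(P),W(P))$ is absolutely continuous with full support and a continuous density for all $(X(P),W(P))$, and for all $P,\theta$, $\pi(\theta\mid P)=h(Q_W(\theta;P),W(P),\theta)c(P)$ for some non-negative $h$ twice continuously differentiable in its first argument and continuously differentiable in $\theta$, with $c(P)$ a normalizing constant. (MZ): $\pi_\eta(\eta\mid\theta)=\pi(\eta\mid\theta,W(P),X(P))$ is strictly positive and twice continuously differentiable in $(\eta,\theta)$, does not depend on $X(P)$, satisfies $\int\eta\,\pi_\eta(\eta\mid\theta)d\eta=0$, and $(Y(P),X(P))$ can be varied freely while holding $W(P)$ fixed. For $c>0$ and any continuous density $\pi_\theta$ on $\mathbb R^p$ with $\pi_\theta(\theta_W(P))>0$, define \[ \pi_c(\theta\mid P)=\frac{\pi_\theta(\theta)\,f\bigl(\tfrac1cQ_W(\theta;P)\bigr)}{\int\pi_\theta(\vartheta)\,f\bigl(\tfrac1cQ_W(\vartheta;P)\bigr)d\vartheta}. \] Then $\pi_c(\cdot\mid P)$ concentrates on $\theta_W(P)$ as $c\to0$: for every $\varepsilon>0$, with $B_\varepsilon(\theta_W(P))=\{\theta:\|\theta-\theta_W(P)\|<\varepsilon\}$,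 \[ \lim_{c\to0}\int1\{\theta\notin B_\varepsilon(\theta_W(P))\}\,d\pi_c(\theta\mid P)=0. \]
   Context: Let $\mathcal D$ be a set and $\mathcal P$ a set of probability distributions on $\mathcal D$; $P\in\mathcal P$ is observed. Fix integers $k>p\ge1$. Let $Y:\mathcal P\to\mathbb R^k$ and $X:\mathcal P\to\mathbb R^{k\times p}$ be known functions with $X(P)$ of full column rank, and $W(P)$ a known symmetric positive definite $k\times k$ matrix. Define $g(\theta;P)=Y(P)-X(P)\theta$, $Q_W(\theta;P)=g(\theta;P)'W(P)g(\theta;P)$, and the pseudo-true value $\theta_W(P)=\arg\min_\theta Q_W(\theta;P)=(X(P)'W(P)X(P))^{-1}X(P)'W(P)Y(P)$. A prior $\pi$ is a joint distribution over $(P,\theta)\in\mathcal P\times\mathbb R^p$, with $\eta=g(\theta;P)$; $\pi(\theta\mid P)$ is the posterior density of $\theta$. Under (MD) and (MZ) the conditional prior density of $\eta$ has the form $\pi_\eta(\eta\mid\theta)=f(\eta'W(P)\eta\mid\theta,W(P))$. The posterior $\pi_c$ corresponds to the scale family of misspecification priors $\pi_{\eta,c}(\eta\mid\theta)\propto f(\tfrac1c\eta'W(P)\eta)$ with prior $\pi_\theta$ on $\theta$. *)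

theory Defs
  imports "HOL-Analysis.Analysis"
begin

definition g_mom :: "real^'k \<Rightarrow> real^'p^'k \<Rightarrow> real^'p \<Rightarrow> real^'k" where
  "g_mom Y X \<theta> = Y - X *v \<theta>"

definition Q_W :: "real^'k \<Rightarrow> real^'p^'k \<Rightarrow> real^'k^'k \<Rightarrow> real^'p \<Rightarrow> real" where
  "Q_W Y X W \<theta> = g_mom Y X \<theta> \<bullet> (W *v g_mom Y X \<theta>)"

definition theta_W :: "real^'k \<Rightarrow> real^'p^'k \<Rightarrow> real^'k^'k \<Rightarrow> real^'p" where
  "theta_W Y X W = matrix_inv (transpose X ** W ** X) *v (transpose X ** W *v Y)"

definition sym_posdef :: "real^'k^'k \<Rightarrow> bool" where
  "sym_posdef W \<longleftrightarrow> transpose W = W \<and> (\<forall>v. v \<noteq> 0 \<longrightarrow> v \<bullet> (W *v v) > 0)"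

definition pi_c :: "(real \<Rightarrow> real) \<Rightarrow> (real^'p \<Rightarrow> real) \<Rightarrow> real^'k \<Rightarrow> real^'p^'k \<Rightarrow> real^'k^'k
                    \<Rightarrow> real \<Rightarrow> real^'p \<Rightarrow> real" where
  "pi_c f \<pi>\<theta> Y X W c \<theta> =
     \<pi>\<theta> \<theta> * f (Q_W Y X W \<theta> / c) /
     (\<integral>t. \<pi>\<theta> t * f (Q_W Y X W t / c) \<partial>lborel)"

end

theory Submission imports Defs begin

lemma dotT: "(x::real^'n) \<bullet> (transpose M *v y) = (M *v x) \<bullet> (y::real^'m)"
  by (metis dot_lmul_matrix inner_commute transpose_matrix_vector)

lemma symW: assumes "transpose W = W" shows "(x::real^'n) \<bullet> (W *v y) = y \<bullet> (W *v x)"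
  by (metis assms dotT inner_commute)

lemma injX: assumes "rank (X::real^'p^'k) = CARD('p)" "X *v h = 0" shows "h = 0"
proof -
  have "inj ((*v) X)" using assms(1) full_rank_injective by blast
  moreover have "X *v 0 = 0" by simp
  ultimately show ?thesis using assms(2) by (metis injD)
qed

lemma quadA: "h \<bullet> ((transpose X ** W ** X) *v h) = (X *v h) \<bullet> (W *v (X *v (h::real^'p)))"
proof -
  have "(transpose X ** W ** X) *v h = transpose X *v (W *v (X *v h))"
    by (simp add: matrix_vector_mul_assoc matrix_mul_assoc)
  thus ?thesis by (simp only: dotT)
qed

lemma posA: assumes "rank (X::real^'p^'k) = CARD('p)" "sym_posdef W" "h \<noteq> 0"
  shows "h \<bullet> ((transpose X ** W ** X) *v h) > 0"
  using assms injX[OF assms(1)] unfolding quadA sym_posdef_def by blast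

lemma invA: assumes "rank (X::real^'p^'k) = CARD('p)" "sym_posdef W"
  shows "invertible (transpose X ** W ** X)"
proof -
  have "\<forall>h. (transpose X ** W ** X) *v h = 0 \<longrightarrow> h = 0"
    using posA[OF assms] by (metis inner_zero_right less_irrefl)
  then obtain B where "B ** (transpose X ** W ** X) = mat 1"
    using matrix_left_invertible_ker by blast
  thus ?thesis using invertible_left_inverse by blast
qed

lemma normal_eq: assumes "rank (X::real^'p^'k) = CARD('p)" "sym_posdef W"
  shows "(transpose X ** W ** X) *v theta_W Y X W = (transpose X ** W) *v Y"
proof -
  let ?A = "transpose X ** W ** X"
  have "?A ** matrix_inv ?A = mat 1"
    using invA[OF assms] unfolding invertible_def matrix_inv_def by (rule someI2_ex) auto
  thus ?thesis unfolding theta_W_def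
    by (metis matrix_vector_mul_assoc matrix_vector_mul_lid)
qed

lemma Q_expand: assumes "rank (X::real^'p^'k) = CARD('p)" "sym_posdef W"
  shows "Q_W Y X W (theta_W Y X W + h) = Q_W Y X W (theta_W Y X W) + h \<bullet> ((transpose X ** W ** X) *v h)"
proof -
  let ?t = "theta_W Y X W"
  define g0 where "g0 = Y - X *v ?t"
  have sW: "transpose W = W" using assms(2) sym_posdef_def by blast
  have cross: "(X *v h) \<bullet> (W *v g0) = 0"
  proof -
    have "(X *v h) \<bullet> (W *v g0) = h \<bullet> (transpose X *v (W *v g0))" by (simp only: dotT)
    also have "transpose X *v (W *v g0) = (transpose X ** W) *v Y - (transpose X ** W ** X) *v ?t"
      unfolding g0_def by (simp add: matrix_vector_mul_assoc matrix_mul_assoc matrix_vector_mult_diff_distrib)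
    also have "\<dots> = 0" using normal_eq[OF assms] by simp
    finally show ?thesis by simp
  qed
  have g: "g_mom Y X (?t + h) = g0 - X *v h"
    unfolding g_mom_def g0_def by (simp add: matrix_vector_right_distrib algebra_simps)
  have "Q_W Y X W (?t + h) = g0 \<bullet> (W *v g0) - g0 \<bullet> (W *v (X *v h)) - (X *v h) \<bullet> (W *v g0) + (X *v h) \<bullet> (W *v (X *v h))"
    unfolding Q_W_def g by (simp add: matrix_vector_mult_diff_distrib inner_diff_left inner_diff_right)
  also have "g0 \<bullet> (W *v (X *v h)) = (X *v h) \<bullet> (W *v g0)" using symW[OF sW] by blast
  finally show ?thesis using cross unfolding quadA Q_W_def g_mom_def g0_def by simp
qed




lemma Q_nonneg: assumes "sym_posdef W" shows "Q_W Y X W t \<ge> 0"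
proof (cases "g_mom Y X t = 0")
  case True thus ?thesis unfolding Q_W_def by simp
next
  case False thus ?thesis using assms unfolding Q_W_def sym_posdef_def by (simp add: less_imp_le)
qed

lemma mv_cont[continuous_intros]: "continuous_on S f \<Longrightarrow> continuous_on S (\<lambda>x. (M::real^'n^'m) *v f x)"
  by (rule bounded_linear.continuous_on[OF matrix_vector_mul_bounded_linear])

lemma Q_cont: "continuous_on UNIV (Q_W Y X W)"
proof -
  have "continuous_on UNIV (\<lambda>t. Y - X *v t)" by (intro continuous_on_diff continuous_on_const mv_cont continuous_on_id)
  hence "continuous_on UNIV (\<lambda>t. (Y - X *v t) \<bullet> (W *v (Y - X *v t)))"
    by (intro continuous_on_inner mv_cont)
  thus ?thesis unfolding Q_W_def[abs_def] g_mom_def .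
qed

lemma quad_lower:
  fixes X :: "real^'p^'k"
  assumes "rank X = CARD('p)" "sym_posdef W" "\<epsilon> > 0"
  obtains m where "m > 0" "\<And>h. norm h \<ge> \<epsilon> \<Longrightarrow> h \<bullet> ((transpose X ** W ** X) *v h) \<ge> m"
proof -
  let ?A = "transpose X ** W ** X"
  let ?q = "\<lambda>h::real^'p. h \<bullet> (?A *v h)"
  have qc: "continuous_on UNIV ?q"
      by (intro continuous_on_inner mv_cont continuous_on_id)
  obtain x0 :: "real^'p" where "norm x0 = \<epsilon>" by (rule vector_choose_size[OF less_imp_le[OF assms(3)]])
  hence "x0 \<in> sphere 0 \<epsilon>" by simp
  hence ne: "sphere (0::real^'p) \<epsilon> \<noteq> {}" by blast
  have "\<exists>u\<in>sphere 0 \<epsilon>. \<forall>y\<in>sphere 0 \<epsilon>. ?q u \<le> ?q y"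
    by (rule continuous_attains_inf[OF compact_sphere ne continuous_on_subset[OF qc]]) simp
  then obtain u where u1: "u \<in> sphere 0 \<epsilon>" and u2: "\<forall>y\<in>sphere 0 \<epsilon>. ?q u \<le> ?q y" by blast
  note u = u1 bspec[OF u2]
  have u0: "u \<noteq> 0" using u(1) assms(3) by auto
  have mpos: "?q u > 0" using posA[OF assms(1,2) u0] .
  show ?thesis
  proof (rule that[OF mpos])
    fix h :: "real^'p" assume h: "norm h \<ge> \<epsilon>"
    define t where "t = norm h / \<epsilon>"
    have t1: "t \<ge> 1" using h assms(3) unfolding t_def by simp
    define v where "v = (1/t) *\<^sub>R h"
    have "t \<noteq> 0" using t1 by simp
    hence hv: "h = t *\<^sub>R v" unfolding v_def by simp
    have h0: "norm h > 0" using h assms(3) by linarith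
    have "norm v = \<epsilon>" using h0 assms(3) unfolding v_def t_def by simp
    hence "?q u \<le> ?q v" using u(2) by simp
    have "?q h = t\<^sup>2 * ?q v" unfolding hv
      by (simp only: matrix_vector_mult_scaleR inner_scaleR_left inner_scaleR_right power2_eq_square mult.assoc)
    moreover have "t\<^sup>2 \<ge> 1" using t1 by (simp add: one_le_power)
    ultimately show "?q u \<le> ?q h"
    proof -
      assume a: "?q h = t\<^sup>2 * ?q v" "t\<^sup>2 \<ge> 1"
      have "1 * ?q v \<le> t\<^sup>2 * ?q v" using mult_right_mono[OF a(2), of "?q v"] \<open>?q u \<le> ?q v\<close> mpos by linarith
      thus ?thesis using a(1) \<open>?q u \<le> ?q v\<close> by linarith
    qed
  qed
qed


theorem proposition2:
  fixes Y :: "real^'k" and X :: "real^'p^'k" and W :: "real^'k^'k"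
    and f :: "real \<Rightarrow> real" and \<pi>\<theta> :: "real^'p \<Rightarrow> real" and \<epsilon> :: real
  assumes kp: "CARD('k) > CARD('p)"
    and rankX: "rank X = CARD('p)"
    and W: "sym_posdef W"
    and f_pos: "\<And>u. u \<ge> 0 \<Longrightarrow> f u > 0"
    and f_cont: "continuous_on {0..} f"
    and f_mono: "\<And>u v. 0 \<le> u \<Longrightarrow> u \<le> v \<Longrightarrow> f v \<le> f u"
    and f_tail: "\<And>a. a > 1 \<Longrightarrow> ((\<lambda>u. f (a * u) / f u) \<longlongrightarrow> 0) at_top"
    and pi_cont: "continuous_on UNIV \<pi>\<theta>"
    and pi_nonneg: "\<And>\<theta>. \<pi>\<theta> \<theta> \<ge> 0"
    and pi_int: "integrable lborel \<pi>\<theta>"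
    and pi_one: "(\<integral>\<theta>. \<pi>\<theta> \<theta> \<partial>lborel) = 1"
    and pi_pos: "\<pi>\<theta> (theta_W Y X W) > 0"
    and eps: "\<epsilon> > 0"
  shows "((\<lambda>c. \<integral>\<theta>. indicator (- ball (theta_W Y X W) \<epsilon>) \<theta> * pi_c f \<pi>\<theta> Y X W c \<theta> \<partial>lborel)
           \<longlongrightarrow> 0) (at_right 0)"
proof -
  let ?t0 = "theta_W Y X W"
  let ?Q = "Q_W Y X W"
  let ?A = "transpose X ** W ** X"
  let ?p0 = "\<pi>\<theta> ?t0"
  have Qnn: "\<And>t. ?Q t \<ge> 0" using Q_nonneg[OF W] by blast
  have Qc: "continuous_on UNIV ?Q" by (rule Q_cont)
  obtain m where mpos: "m > 0" and mq: "\<And>h. norm h \<ge> \<epsilon> \<Longrightarrow> h \<bullet> (?A *v h) \<ge> m"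
    by (rule quad_lower[OF rankX W eps]) blast
  define q0 where "q0 = ?Q ?t0"
  define q1 where "q1 = q0 + m/2"
  define q2 where "q2 = q0 + m"
  have q0nn: "q0 \<ge> 0" unfolding q0_def by (rule Qnn)
  have q1pos: "q1 > 0" unfolding q1_def using q0nn mpos by simp
  have q12: "q1 < q2" unfolding q1_def q2_def using mpos by simp
  have far: "?Q \<theta> \<ge> q2" if th: "\<theta> \<notin> ball ?t0 \<epsilon>" for \<theta>
  proof -
    have "norm (\<theta> - ?t0) \<ge> \<epsilon>" using th by (simp add: dist_norm norm_minus_commute)
    hence "(\<theta> - ?t0) \<bullet> (?A *v (\<theta> - ?t0)) \<ge> m" by (rule mq)
    moreover have "?Q (?t0 + (\<theta> - ?t0)) = q0 + (\<theta> - ?t0) \<bullet> (?A *v (\<theta> - ?t0))"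
      unfolding q0_def by (rule Q_expand[OF rankX W])
    ultimately show ?thesis unfolding q2_def by simp
  qed
  have "\<forall>e>0. \<exists>d>0. \<forall>x'\<in>UNIV. dist x' ?t0 < d \<longrightarrow> dist (?Q x') (?Q ?t0) < e"
    using Qc unfolding continuous_on_iff by blast
  hence "\<exists>d>0. \<forall>x'\<in>UNIV. dist x' ?t0 < d \<longrightarrow> dist (?Q x') (?Q ?t0) < m/2"
    using half_gt_zero[OF mpos] by blast
  then obtain d1 where d1: "d1 > 0" "\<And>x'. dist x' ?t0 < d1 \<Longrightarrow> dist (?Q x') q0 < m/2"
    unfolding q0_def by auto
  have "\<forall>e>0. \<exists>d>0. \<forall>x'\<in>UNIV. dist x' ?t0 < d \<longrightarrow> dist (\<pi>\<theta> x') ?p0 < e"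
    using pi_cont unfolding continuous_on_iff by blast
  hence "\<exists>d>0. \<forall>x'\<in>UNIV. dist x' ?t0 < d \<longrightarrow> dist (\<pi>\<theta> x') ?p0 < ?p0/2"
    using half_gt_zero[OF pi_pos] by blast
  then obtain d2 where d2: "d2 > 0" "\<And>x'. dist x' ?t0 < d2 \<Longrightarrow> dist (\<pi>\<theta> x') ?p0 < ?p0/2"
    by auto
  define \<delta> where "\<delta> = min d1 d2"
  have dpos: "\<delta> > 0" unfolding \<delta>_def using d1 d2 by simp
  define B where "B = ball ?t0 \<delta>"
  have near: "?Q \<theta> \<le> q1 \<and> \<pi>\<theta> \<theta> \<ge> ?p0/2" if th: "\<theta> \<in> B" for \<theta>
  proof -
    have "dist \<theta> ?t0 < d1" "dist \<theta> ?t0 < d2" using th unfolding B_def \<delta>_def by (auto simp: dist_commute)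
    hence "dist (?Q \<theta>) q0 < m/2" "dist (\<pi>\<theta> \<theta>) ?p0 < ?p0/2" using d1(2) d2(2) by auto
    thus ?thesis unfolding q1_def dist_real_def abs_less_iff by linarith
  qed
  define K0 where "K0 = ?p0/2 * measure lborel B"
  have K0pos: "K0 > 0" unfolding K0_def B_def using pi_pos content_ball_pos[OF dpos] by simp
  have Bsets: "B \<in> sets lborel" unfolding B_def by simp
  have Bfin: "emeasure lborel B < \<infinity>" unfolding B_def by (rule emeasure_bounded_finite) simp
  have Csets: "- ball ?t0 \<epsilon> \<in> sets lborel" by simp
  define N where "N = (\<lambda>c. \<integral>\<theta>. indicator (- ball ?t0 \<epsilon>) \<theta> * pi_c f \<pi>\<theta> Y X W c \<theta> \<partial>lborel)"
  define U where "U = (\<lambda>c. f (q2/c) / (K0 * f (q1/c)))"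
  have key: "0 \<le> N c \<and> N c \<le> U c" if c: "c > 0" for c
  proof -
    let ?g = "\<lambda>\<theta>. \<pi>\<theta> \<theta> * f (?Q \<theta> / c)"
    define Z where "Z = (\<integral>\<theta>. ?g \<theta> \<partial>lborel)"
    have Qc_nn: "?Q \<theta> / c \<ge> 0" for \<theta> using Qnn[of \<theta>] c by simp
    have fc: "continuous_on UNIV (\<lambda>\<theta>. f (?Q \<theta> / c))"
      by (rule continuous_on_compose2[OF f_cont continuous_on_divide[OF Qc continuous_on_const]])
        (use c Qc_nn in auto)
    have gc: "continuous_on UNIV ?g" by (intro continuous_on_mult pi_cont fc)
    have gm: "?g \<in> borel_measurable lborel" using borel_measurable_continuous_onI[OF gc] by simp
    have fb: "0 < f (?Q \<theta> / c) \<and> f (?Q \<theta> / c) \<le> f 0" for \<theta>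
      using f_pos[OF Qc_nn[of \<theta>]] f_mono[OF order_refl Qc_nn[of \<theta>]] by simp
    have gnn: "0 \<le> ?g \<theta>" for \<theta> using fb[of \<theta>] pi_nonneg[of \<theta>] by simp
    have gint: "integrable lborel ?g"
    proof (rule Bochner_Integration.integrable_bound[OF integrable_mult_left[OF pi_int, of "f 0"] gm])
      show "AE x in lborel. norm (?g x) \<le> norm (\<pi>\<theta> x * f 0)"
      proof (rule AE_I2)
        fix x
        have "?g x \<le> \<pi>\<theta> x * f 0" using fb[of x] pi_nonneg[of x] by (simp add: mult_left_mono)
        thus "norm (?g x) \<le> norm (\<pi>\<theta> x * f 0)" using gnn[of x] by simp
      qed
    qed
    have f1pos: "f (q1/c) > 0" using f_pos q1pos c by simp
    have Zlow: "K0 * f (q1/c) \<le> Z"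
    proof -
      have i1: "integrable lborel (\<lambda>\<theta>. indicator B \<theta> * (?p0/2 * f (q1/c)))"
        using integrable_real_indicator[OF Bsets Bfin] by (rule integrable_mult_left)
      have "(\<integral>\<theta>. indicator B \<theta> * (?p0/2 * f (q1/c)) \<partial>lborel) \<le> Z"
        unfolding Z_def
      proof (rule integral_mono[OF i1 gint])
        fix \<theta> :: "real^'p" assume "\<theta> \<in> space lborel"
        show "indicator B \<theta> * (?p0/2 * f (q1/c)) \<le> ?g \<theta>"
        proof (cases "\<theta> \<in> B")
          case True
          have "f (q1/c) \<le> f (?Q \<theta> / c)"
            using f_mono[OF Qc_nn[of \<theta>]] near[OF True] c by (simp add: divide_right_mono)
          moreover have "?p0/2 \<le> \<pi>\<theta> \<theta>" using near[OF True] by simp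
          ultimately have "?p0/2 * f (q1/c) \<le> \<pi>\<theta> \<theta> * f (?Q \<theta> / c)"
            using pi_pos f1pos by (intro mult_mono) auto
          thus ?thesis using True by simp
        next
          case False thus ?thesis using gnn[of \<theta>] by simp
        qed
      qed
      moreover have "(\<integral>\<theta>. indicator B \<theta> * (?p0/2 * f (q1/c)) \<partial>lborel) = K0 * f (q1/c)"
        unfolding K0_def by simp
      ultimately show ?thesis by linarith
    qed
    have Zpos: "Z > 0" using Zlow K0pos f1pos by (smt (verit) mult_pos_pos)
    have Neq: "N c = (\<integral>\<theta>. indicator (- ball ?t0 \<epsilon>) \<theta> * ?g \<theta> \<partial>lborel) / Z"
    proof -
      have "(\<lambda>\<theta>. indicator (- ball ?t0 \<epsilon>) \<theta> * pi_c f \<pi>\<theta> Y X W c \<theta>)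
          = (\<lambda>\<theta>. indicator (- ball ?t0 \<epsilon>) \<theta> * ?g \<theta> / Z)"
        unfolding pi_c_def Z_def by (simp add: fun_eq_iff)
      thus ?thesis unfolding N_def by simp
    qed
    have iint: "integrable lborel (\<lambda>\<theta>. indicator (- ball ?t0 \<epsilon>) \<theta> * ?g \<theta>)"
      using integrable_mult_indicator[OF Csets gint] by simp
    have up: "(\<integral>\<theta>. indicator (- ball ?t0 \<epsilon>) \<theta> * ?g \<theta> \<partial>lborel) \<le> f (q2/c)"
    proof -
      have "(\<integral>\<theta>. indicator (- ball ?t0 \<epsilon>) \<theta> * ?g \<theta> \<partial>lborel) \<le> (\<integral>\<theta>. \<pi>\<theta> \<theta> * f (q2/c) \<partial>lborel)"
      proof (rule integral_mono[OF iint integrable_mult_left[OF pi_int]])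
        fix \<theta> :: "real^'p" assume "\<theta> \<in> space lborel"
        have f2nn: "0 \<le> f (q2/c)" using f_pos[of "q2/c"] q1pos q12 c by simp
        show "indicator (- ball ?t0 \<epsilon>) \<theta> * ?g \<theta> \<le> \<pi>\<theta> \<theta> * f (q2/c)"
        proof (cases "\<theta> \<in> ball ?t0 \<epsilon>")
          case True thus ?thesis using pi_nonneg[of \<theta>] f2nn by simp
        next
          case False
          have "q2/c \<ge> 0" using q1pos q12 c by simp
          hence "f (?Q \<theta> / c) \<le> f (q2/c)"
            using f_mono far[OF False] c by (simp add: divide_right_mono)
          hence "?g \<theta> \<le> \<pi>\<theta> \<theta> * f (q2/c)" using pi_nonneg[of \<theta>] by (simp add: mult_left_mono)
          thus ?thesis using False by simp
        qed
      qed
      also have "\<dots> = f (q2/c)" using pi_one by simp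
      finally show ?thesis .
    qed
    have lownn: "0 \<le> (\<integral>\<theta>. indicator (- ball ?t0 \<epsilon>) \<theta> * ?g \<theta> \<partial>lborel)"
      by (rule integral_nonneg_AE) (rule AE_I2, simp add: gnn)
    have "N c \<le> f (q2/c) / Z" unfolding Neq using up Zpos by (simp add: divide_right_mono)
    also have "\<dots> \<le> U c" unfolding U_def
      using Zlow K0pos f1pos f_pos[of "q2/c"] q1pos q12 c Zpos
      by (intro divide_left_mono) (auto intro!: mult_pos_pos less_imp_le)
    finally show ?thesis unfolding Neq using lownn Zpos by simp
  qed
  have lim1: "filterlim (\<lambda>c. q1 / c) at_top (at_right 0)"
    using filterlim_tendsto_pos_mult_at_top[OF tendsto_const q1pos filterlim_inverse_at_top_right]
    by (simp add: divide_inverse)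
  have a1: "q2/q1 > 1" using q1pos q12 by simp
  have "((\<lambda>c. f (q2/q1 * (q1/c)) / f (q1/c)) \<longlongrightarrow> 0) (at_right 0)"
    by (rule filterlim_compose[OF f_tail[OF a1] lim1])
  moreover have "(\<lambda>c. f (q2/q1 * (q1/c)) / f (q1/c)) = (\<lambda>c. f (q2/c) / f (q1/c))"
    using q1pos by (simp add: fun_eq_iff)
  ultimately have "((\<lambda>c. f (q2/c) / f (q1/c)) \<longlongrightarrow> 0) (at_right 0)" by metis
  hence "((\<lambda>c. (f (q2/c) / f (q1/c)) / K0) \<longlongrightarrow> 0 / K0) (at_right 0)"
    by (intro tendsto_divide tendsto_const) (use K0pos in auto)
  hence Ulim: "(U \<longlongrightarrow> 0) (at_right 0)" unfolding U_def by (simp add: field_simps)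
  have "(N \<longlongrightarrow> 0) (at_right 0)"
  proof (rule tendsto_sandwich[OF _ _ tendsto_const Ulim])
    show "\<forall>\<^sub>F c in at_right 0. 0 \<le> N c"
      by (rule eventually_mono[OF eventually_at_right_less]) (use key in auto)
    show "\<forall>\<^sub>F c in at_right 0. N c \<le> U c"
      by (rule eventually_mono[OF eventually_at_right_less]) (use key in auto)
  qed
  thus ?thesis unfolding N_def .
qed

end
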